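(* Let $\mathcal W=\{w\in\mathbb R^2:\|w\|_2=1\}$, parametrize $w=(\sin\phi,\cos\phi)$ with $\phi\in[0,2\pi)$, let $Z_1,\dots,Z_n$ be i.i.d. $\mathcal N(0,I_2)$, and let $\ell(w,z)=-\langle w,z\rangle$. Let $W$ be the empirical risk minimizer, i.e. $W=\bar Z/\|\bar Z\|_2$ where $\bar Z=\frac1n\sum_{i=1}^nZ_i$ (equivalently, the phase maximizing $\langle w,\bar Z\rangle$). Let $\xi$ be a random angle independent of $S$ that equals $0$ with probability $\epsilon\in[0,1]$ and is otherwise uniform on $(-\pi,\pi)$, and let $W'$ be the hypothesis whose phase is the phase of $W$ plus $\xi$ modulo $2\pi$. Then $\mathrm{gen}(\mu,P_{W|S})=\sqrt{\frac{\pi}{2n}}$ and $\mathrm{gen}(\mu,P_{W'|S})=\epsilon\sqrt{\frac{\pi}{2n}}$. Moreover $I(W;S)=\infty$, and for $\epsilon\in(0,1)$ also $I(W';S)=\infty$.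
   Context: Here $\mu=\mathcal N(0,I_2)$; the generalization error is $\mathrm{gen}(\mu,P_{W|S})=\mathbb E[L_\mu(W)-L_S(W)]$ with $L_\mu(w)=\mathbb E_{Z\sim\mu}\ell(w,Z)$ and $L_S(w)=\frac1n\sum_i\ell(w,Z_i)$. *)

theory Defs
  imports "HOL-Probability.Probability"
begin

definition mu2 :: "(real \<times> real) measure" where
  "mu2 = density lborel (\<lambda>z. ennreal (std_normal_density (fst z) * std_normal_density (snd z)))"

definition loss :: "real \<times> real \<Rightarrow> real \<times> real \<Rightarrow> real" where
  "loss w z = - inner w z"

definition pop_risk :: "real \<times> real \<Rightarrow> real" where
  "pop_risk w = (\<integral>z. loss w z \<partial>mu2)"

definition emp_risk :: "nat \<Rightarrow> (nat \<Rightarrow> real \<times> real) \<Rightarrow> real \<times> real \<Rightarrow> real" where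
  "emp_risk n s w = (\<Sum>i<n. loss w (s i)) / real n"

definition gen :: "'a measure \<Rightarrow> nat \<Rightarrow> ('a \<Rightarrow> nat \<Rightarrow> real \<times> real) \<Rightarrow> ('a \<Rightarrow> real \<times> real) \<Rightarrow> real" where
  "gen M n S W = (\<integral>\<omega>. pop_risk (W \<omega>) - emp_risk n (S \<omega>) (W \<omega>) \<partial>M)"

definition sample :: "(nat \<Rightarrow> 'a \<Rightarrow> real \<times> real) \<Rightarrow> nat \<Rightarrow> 'a \<Rightarrow> nat \<Rightarrow> real \<times> real" where
  "sample Z n \<omega> = restrict (\<lambda>i. Z i \<omega>) {..<n}"

definition sample_space :: "nat \<Rightarrow> (nat \<Rightarrow> real \<times> real) measure" where
  "sample_space n = PiM {..<n} (\<lambda>_. borel)"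

definition zbar :: "(nat \<Rightarrow> 'a \<Rightarrow> real \<times> real) \<Rightarrow> nat \<Rightarrow> 'a \<Rightarrow> real \<times> real" where
  "zbar Z n \<omega> = (1 / real n) *\<^sub>R (\<Sum>i<n. Z i \<omega>)"

definition erm :: "(nat \<Rightarrow> 'a \<Rightarrow> real \<times> real) \<Rightarrow> nat \<Rightarrow> 'a \<Rightarrow> real \<times> real" where
  "erm Z n \<omega> = (1 / norm (zbar Z n \<omega>)) *\<^sub>R zbar Z n \<omega>"

definition hyp :: "real \<Rightarrow> real \<times> real" where
  "hyp \<phi> = (sin \<phi>, cos \<phi>)"

definition phase :: "real \<times> real \<Rightarrow> real" where
  "phase w = (SOME \<phi>. 0 \<le> \<phi> \<and> \<phi> < 2 * pi \<and> hyp \<phi> = w)"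

definition mod2pi :: "real \<Rightarrow> real" where
  "mod2pi x = x - 2 * pi * of_int \<lfloor>x / (2 * pi)\<rfloor>"

definition perturbed :: "(nat \<Rightarrow> 'a \<Rightarrow> real \<times> real) \<Rightarrow> nat \<Rightarrow> ('a \<Rightarrow> real) \<Rightarrow> 'a \<Rightarrow> real \<times> real" where
  "perturbed Z n \<xi> \<omega> = hyp (mod2pi (phase (erm Z n \<omega>) + \<xi> \<omega>))"

text \<open>KL divergence D(P || Q) with values in [0, \<infinity>]: it is \<infinity> unless P \<ll> Q and the
  log-density is P-integrable (for probability measures its negative part is always integrable).\<close>
definition KL_ext :: "'b measure \<Rightarrow> 'b measure \<Rightarrow> ereal" where
  "KL_ext P Q = (if sets P = sets Q \<and> absolutely_continuous Q P
      \<and> integrable P (\<lambda>x. ln (enn2real (RN_deriv Q P x)))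
     then ereal (\<integral>x. ln (enn2real (RN_deriv Q P x)) \<partial>P) else \<infinity>)"

definition mutual_info :: "'a measure \<Rightarrow> 'b measure \<Rightarrow> ('a \<Rightarrow> 'b) \<Rightarrow> 'c measure \<Rightarrow> ('a \<Rightarrow> 'c) \<Rightarrow> ereal" where
  "mutual_info M MX X MY Y =
     KL_ext (distr M (MX \<Otimes>\<^sub>M MY) (\<lambda>\<omega>. (X \<omega>, Y \<omega>))) (distr M MX X \<Otimes>\<^sub>M distr M MY Y)"

end

theory Submission
  imports Defs
begin


definition nd2 :: "real \<Rightarrow> real \<times> real \<Rightarrow> real" where
  "nd2 \<sigma> z = normal_density 0 \<sigma> (fst z) * normal_density 0 \<sigma> (snd z)"

definition nu :: "real \<Rightarrow> (real \<times> real) measure" where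
  "nu \<sigma> = density lborel (\<lambda>z. ennreal (nd2 \<sigma> z))"

lemma fst_borel_measurable[measurable]: "(fst :: real \<times> real \<Rightarrow> real) \<in> borel_measurable borel"
  by (intro borel_measurable_continuous_onI continuous_intros)
lemma snd_borel_measurable[measurable]: "(snd :: real \<times> real \<Rightarrow> real) \<in> borel_measurable borel"
  by (intro borel_measurable_continuous_onI continuous_intros)

lemma nd2_measurable[measurable]: "nd2 \<sigma> \<in> borel_measurable borel"
  unfolding nd2_def[abs_def] by measurable

lemma nd2_nonneg: "0 \<le> nd2 \<sigma> z" by (simp add: nd2_def)

lemma mu2_nu: "mu2 = nu 1"
  by (simp add: mu2_def nu_def nd2_def)

lemma sets_nu[simp, measurable_cong]: "sets (nu \<sigma>) = sets borel"
  by (simp add: nu_def)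
lemma space_nu[simp]: "space (nu \<sigma>) = UNIV"
  by (simp add: nu_def)

lemma nu_prod:
  assumes "0 < \<sigma>"
  shows "nu \<sigma> = density lborel (normal_density 0 \<sigma>) \<Otimes>\<^sub>M density lborel (normal_density 0 \<sigma>)"
proof -
  interpret N: prob_space "density lborel (normal_density 0 \<sigma>)"
    using prob_space_normal_density[OF assms] .
  have e: "(\<lambda>(x,y). ennreal (normal_density 0 \<sigma> x) * ennreal (normal_density 0 \<sigma> y)) = (\<lambda>z. ennreal (nd2 \<sigma> z))"
    by (auto simp: nd2_def ennreal_mult fun_eq_iff)
  have "density lborel (\<lambda>x. ennreal (normal_density 0 \<sigma> x)) \<Otimes>\<^sub>M density lborel (\<lambda>x. ennreal (normal_density 0 \<sigma> x))
     = density (lborel \<Otimes>\<^sub>M lborel) (\<lambda>(x,y). ennreal (normal_density 0 \<sigma> x) * ennreal (normal_density 0 \<sigma> y))"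
    by (rule pair_measure_density) (auto intro: sigma_finite_lborel N.sigma_finite_measure)
  then show ?thesis unfolding e lborel_prod nu_def by simp
qed

lemma prob_space_nu: "0 < \<sigma> \<Longrightarrow> prob_space (nu \<sigma>)"
proof -
  assume s: "0 < \<sigma>"
  interpret N: prob_space "density lborel (normal_density 0 \<sigma>)"
    using prob_space_normal_density[OF s] .
  interpret NN: pair_prob_space "density lborel (normal_density 0 \<sigma>)" "density lborel (normal_density 0 \<sigma>)" ..
  show ?thesis unfolding nu_prod[OF s] by (rule NN.prob_space_axioms)
qed

lemma conv1:
  assumes "0 < \<sigma>" "0 < \<tau>"
  shows "(\<integral>\<^sup>+y. ennreal (normal_density 0 \<sigma> y * normal_density 0 \<tau> (x - y)) \<partial>lborel)
     = ennreal (normal_density 0 (sqrt (\<sigma>\<^sup>2 + \<tau>\<^sup>2)) x)"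
proof -
  have "(\<lambda>x. \<integral>\<^sup>+y. ennreal (normal_density 0 \<tau> (x - y) * normal_density 0 \<sigma> y) \<partial>lborel) =
    normal_density 0 (sqrt (\<tau>\<^sup>2 + \<sigma>\<^sup>2))"
    by (rule conv_normal_density_zero_mean) (use assms in auto)
  from fun_cong[OF this, of x] show ?thesis
    by (simp add: mult.commute add.commute)
qed

lemma conv2:
  assumes "0 < \<sigma>" "0 < \<tau>"
  shows "(\<integral>\<^sup>+p. ennreal (nd2 \<sigma> p * nd2 \<tau> (z - p)) \<partial>lborel)
     = ennreal (nd2 (sqrt (\<sigma>\<^sup>2 + \<tau>\<^sup>2)) z)"
proof -
  let ?n = "normal_density 0 \<sigma>" and ?m = "normal_density 0 \<tau>"
  have "(\<integral>\<^sup>+p. ennreal (nd2 \<sigma> p * nd2 \<tau> (z - p)) \<partial>lborel)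
      = (\<integral>\<^sup>+p. ennreal (nd2 \<sigma> p * nd2 \<tau> (z - p)) \<partial>(lborel \<Otimes>\<^sub>M lborel))"
    by (simp add: lborel_prod)
  also have "\<dots> = (\<integral>\<^sup>+x. \<integral>\<^sup>+y. ennreal (nd2 \<sigma> (x,y) * nd2 \<tau> (z - (x,y))) \<partial>lborel \<partial>lborel)"
  proof (rule lborel.nn_integral_fst[symmetric, of "\<lambda>p. ennreal (nd2 \<sigma> p * nd2 \<tau> (z - p))", simplified])
    show "(\<lambda>p. ennreal (nd2 \<sigma> p * nd2 \<tau> (z - p))) \<in> borel_measurable (lborel \<Otimes>\<^sub>M lborel)"
      unfolding lborel_prod by measurable
  qed
  also have "\<dots> = (\<integral>\<^sup>+x. ennreal (?n x * ?m (fst z - x)) * \<integral>\<^sup>+y. ennreal (?n y * ?m (snd z - y)) \<partial>lborel \<partial>lborel)"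
    by (intro nn_integral_cong, subst nn_integral_cmult[symmetric])
       (auto simp: nd2_def ennreal_mult[symmetric] intro!: nn_integral_cong simp: ac_simps)
  also have "\<dots> = (\<integral>\<^sup>+x. ennreal (?n x * ?m (fst z - x)) \<partial>lborel) * (\<integral>\<^sup>+y. ennreal (?n y * ?m (snd z - y)) \<partial>lborel)"
    by (rule nn_integral_multc) measurable
  also have "\<dots> = ennreal (nd2 (sqrt (\<sigma>\<^sup>2 + \<tau>\<^sup>2)) z)"
    unfolding conv1[OF assms] by (simp add: nd2_def ennreal_mult)
  finally show ?thesis .
qed

lemma nu_conv:
  assumes s: "0 < \<sigma>" "0 < \<tau>"
  shows "nu \<sigma> \<star> nu \<tau> = nu (sqrt (\<sigma>\<^sup>2 + \<tau>\<^sup>2))"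
proof (rule measure_eqI)
  show "sets (nu \<sigma> \<star> nu \<tau>) = sets (nu (sqrt (\<sigma>\<^sup>2 + \<tau>\<^sup>2)))" by simp
  fix A assume "A \<in> sets (nu \<sigma> \<star> nu \<tau>)"
  then have A[measurable]: "A \<in> sets borel" by simp
  interpret P1: prob_space "nu \<sigma>" using prob_space_nu s by auto
  interpret P2: prob_space "nu \<tau>" using prob_space_nu s by auto
  have "emeasure (nu \<sigma> \<star> nu \<tau>) A = (\<integral>\<^sup>+p. \<integral>\<^sup>+q. indicator A (p + q) \<partial>nu \<tau> \<partial>nu \<sigma>)"
    by (rule convolution_emeasure') (auto intro: P1.finite_measure_axioms P2.finite_measure_axioms)
  also have "\<dots> = (\<integral>\<^sup>+p. ennreal (nd2 \<sigma> p) * \<integral>\<^sup>+q. ennreal (nd2 \<tau> q) * indicator A (p + q) \<partial>lborel \<partial>lborel)"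
    unfolding nu_def by (simp add: nn_integral_density)
  also have "\<dots> = (\<integral>\<^sup>+p. \<integral>\<^sup>+z. ennreal (nd2 \<sigma> p) * (ennreal (nd2 \<tau> (z - p)) * indicator A z) \<partial>lborel \<partial>lborel)"
  proof (intro nn_integral_cong)
    fix p :: "real \<times> real"
    have "(\<integral>\<^sup>+z. ennreal (nd2 \<tau> (z - p)) * indicator A z \<partial>lborel)
        = (\<integral>\<^sup>+z. ennreal (nd2 \<tau> (z - p)) * indicator A z \<partial>distr lborel borel ((+) p))"
      by (simp add: lborel_distr_plus)
    also have "\<dots> = (\<integral>\<^sup>+q. ennreal (nd2 \<tau> q) * indicator A (p + q) \<partial>lborel)"
      by (subst nn_integral_distr) auto
    finally show "ennreal (nd2 \<sigma> p) * (\<integral>\<^sup>+q. ennreal (nd2 \<tau> q) * indicator A (p + q) \<partial>lborel)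
      = (\<integral>\<^sup>+z. ennreal (nd2 \<sigma> p) * (ennreal (nd2 \<tau> (z - p)) * indicator A z) \<partial>lborel)"
      by (subst nn_integral_cmult) auto
  qed
  also have "\<dots> = (\<integral>\<^sup>+z. \<integral>\<^sup>+p. ennreal (nd2 \<sigma> p) * (ennreal (nd2 \<tau> (z - p)) * indicator A z) \<partial>lborel \<partial>lborel)"
    by (rule lborel_pair.Fubini') measurable
  also have "\<dots> = (\<integral>\<^sup>+z. ennreal (nd2 (sqrt (\<sigma>\<^sup>2 + \<tau>\<^sup>2)) z) * indicator A z \<partial>lborel)"
  proof (intro nn_integral_cong)
    fix z :: "real \<times> real"
    have "(\<integral>\<^sup>+p. ennreal (nd2 \<sigma> p) * (ennreal (nd2 \<tau> (z - p)) * indicator A z) \<partial>lborel)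
       = (\<integral>\<^sup>+p. ennreal (nd2 \<sigma> p * nd2 \<tau> (z - p)) \<partial>lborel) * indicator A z"
      by (subst nn_integral_multc[symmetric]) (auto simp: ennreal_mult nd2_nonneg ac_simps)
    then show "(\<integral>\<^sup>+p. ennreal (nd2 \<sigma> p) * (ennreal (nd2 \<tau> (z - p)) * indicator A z) \<partial>lborel)
       = ennreal (nd2 (sqrt (\<sigma>\<^sup>2 + \<tau>\<^sup>2)) z) * indicator A z"
      by (simp add: conv2[OF s])
  qed
  also have "\<dots> = emeasure (nu (sqrt (\<sigma>\<^sup>2 + \<tau>\<^sup>2))) A"
    unfolding nu_def by (simp add: emeasure_density)
  finally show "emeasure (nu \<sigma> \<star> nu \<tau>) A = emeasure (nu (sqrt (\<sigma>\<^sup>2 + \<tau>\<^sup>2))) A" .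
qed

lemma even_nn:
  fixes f :: "real \<Rightarrow> ennreal"
  assumes [measurable]: "f \<in> borel_measurable borel" and ev: "\<And>x. f (- x) = f x"
  shows "(\<integral>\<^sup>+x. f x \<partial>lborel) = 2 * (\<integral>\<^sup>+x. f x * indicator {0<..} x \<partial>lborel)"
proof -
  have "(\<integral>\<^sup>+x. f x \<partial>lborel) = (\<integral>\<^sup>+x. f x * indicator {0<..} x + f x * indicator {..<0} x \<partial>lborel)"
    by (intro nn_integral_cong_AE AE_I[where N="{0}"]) (auto split: split_indicator)
  also have "\<dots> = (\<integral>\<^sup>+x. f x * indicator {0<..} x \<partial>lborel) + (\<integral>\<^sup>+x. f x * indicator {..<0} x \<partial>lborel)"
    by (rule nn_integral_add) auto
  also have "(\<integral>\<^sup>+x. f x * indicator {..<0} x \<partial>lborel) = (\<integral>\<^sup>+x. f x * indicator {0<..} x \<partial>lborel)"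
  proof -
    have "(\<integral>\<^sup>+x. f x * indicator {..<0} x \<partial>lborel) = ennreal \<bar>-1\<bar> * (\<integral>\<^sup>+x. f (0 + -1 * x) * indicator {..<0} (0 + -1 * x) \<partial>lborel)"
      by (rule nn_integral_real_affine) auto
    also have "\<dots> = (\<integral>\<^sup>+x. f x * indicator {0<..} x \<partial>lborel)"
      by (auto simp: ev intro!: nn_integral_cong split: split_indicator)
    finally show ?thesis .
  qed
  finally show ?thesis by (simp add: mult_2)
qed

lemma moment2:
  fixes a :: real assumes a: "0 < a"
  shows "(\<integral>\<^sup>+x. ennreal (x\<^sup>2 * exp (- a * x\<^sup>2)) * indicator {0<..} x \<partial>lborel) = ennreal (sqrt pi / (4 * a * sqrt a))"
proof -
  have hb: "has_bochner_integral lborel (\<lambda>x::real. indicator {0..} x *\<^sub>R (exp (-x\<^sup>2)*x^(2 * 1)))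
       ((sqrt pi / 2) * (fact (2 * 1) / (2 ^ (2 * 1) * fact 1)))"
    by (rule gaussian_moment_even_pos)
  have I: "(\<integral>\<^sup>+x. ennreal (x\<^sup>2 * exp (- x\<^sup>2)) * indicator {0<..} x \<partial>lborel) = ennreal (sqrt pi / 4)"
  proof -
    have "(\<integral>\<^sup>+x. ennreal (x\<^sup>2 * exp (- x\<^sup>2)) * indicator {0<..} x \<partial>lborel)
        = (\<integral>\<^sup>+x. ennreal (indicator {0..} x *\<^sub>R (exp (-x\<^sup>2)*x^(2 * 1))) \<partial>lborel)"
      by (intro nn_integral_cong) (auto split: split_indicator simp: mult.commute)
    also have "\<dots> = ennreal ((sqrt pi / 2) * (fact (2 * 1) / (2 ^ (2 * 1) * fact 1)))"
      using integrable.intros[OF hb] has_bochner_integral_integral_eq[OF hb]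
      by (subst nn_integral_eq_integral) (auto split: split_indicator)
    finally show ?thesis by simp
  qed
  define c where "c = 1 / sqrt a"
  have c: "0 < c" using a by (simp add: c_def)
  have "(\<integral>\<^sup>+x. ennreal (x\<^sup>2 * exp (- a * x\<^sup>2)) * indicator {0<..} x \<partial>lborel)
     = ennreal \<bar>c\<bar> * (\<integral>\<^sup>+x. ennreal ((0 + c * x)\<^sup>2 * exp (- a * (0 + c * x)\<^sup>2)) * indicator {0<..} (0 + c * x) \<partial>lborel)"
    by (rule nn_integral_real_affine) (use c in auto)
  also have "\<dots> = ennreal c * (\<integral>\<^sup>+x. ennreal (c\<^sup>2) * (ennreal (x\<^sup>2 * exp (- x\<^sup>2)) * indicator {0<..} x) \<partial>lborel)"
  proof -
    have ac: "a * c\<^sup>2 = 1" using a by (simp add: c_def power_divide)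
    have "ennreal ((0 + c * x)\<^sup>2 * exp (- a * (0 + c * x)\<^sup>2)) * indicator {0<..} (0 + c * x)
        = ennreal (c\<^sup>2) * (ennreal (x\<^sup>2 * exp (- x\<^sup>2)) * indicator {0<..} x)" for x
    proof -
      have "a * (c * x)\<^sup>2 = x\<^sup>2" using ac by (simp add: power_mult_distrib mult.assoc[symmetric])
      moreover have "(0 < c * x) = (0 < x)" using c by (simp add: zero_less_mult_iff)
      ultimately show ?thesis
        by (auto split: split_indicator simp: ennreal_mult[symmetric] power_mult_distrib)
    qed
    then show ?thesis using c by simp
  qed
  also have "\<dots> = ennreal c * (ennreal (c\<^sup>2) * ennreal (sqrt pi / 4))"
    by (subst nn_integral_cmult) (auto simp: I)
  also have "\<dots> = ennreal (sqrt pi / (4 * a * sqrt a))"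
    using a c by (simp add: ennreal_mult[symmetric] c_def power_divide)
  finally show ?thesis .
qed

lemma arctan_int:
  "(\<integral>\<^sup>+s. ennreal (1 / (1 + s\<^sup>2)) * indicator {0<..} s \<partial>lborel) = ennreal (pi / 2)"
proof -
  have "(\<integral>\<^sup>+s. ennreal (1 / (1 + s\<^sup>2)) * indicator {0<..} s \<partial>lborel) = (\<integral>\<^sup>+s. ennreal (1 / (1 + s\<^sup>2)) * indicator {0..} s \<partial>lborel)"
    by (intro nn_integral_cong_AE AE_I[where N="{0}"]) (auto split: split_indicator)
  also have "\<dots> = ennreal (pi / 2 - arctan 0)"
  proof (rule nn_integral_FTC_atLeast)
    show "((\<lambda>a. arctan a) \<longlongrightarrow> (pi / 2)) at_top"
      by (simp add: tendsto_arctan_at_top)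
  qed (auto intro!: derivative_eq_intros simp: add_nonneg_eq_0_iff field_simps power2_eq_square)
  finally show ?thesis by simp
qed

lemma meas_nn_int:
  assumes "(\<lambda>(x,y). f x y) \<in> borel_measurable (borel :: (real \<times> real) measure)"
  shows "(\<lambda>x. \<integral>\<^sup>+y. f x y \<partial>lborel) \<in> borel_measurable (borel :: real measure)"
proof (rule lborel.borel_measurable_nn_integral)
  have s: "sets (borel \<Otimes>\<^sub>M lborel) = sets (borel :: (real \<times> real) measure)"
    by (subst borel_prod[symmetric]) (rule sets_pair_measure_cong; simp)
  show "(\<lambda>(x, y). f x y) \<in> borel_measurable (borel \<Otimes>\<^sub>M lborel)"
    using assms by (simp add: measurable_cong_sets[OF s refl])
qed

lemma K_int:
  fixes b :: real assumes b: "0 < b"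
  shows "(\<integral>\<^sup>+x. \<integral>\<^sup>+y. ennreal (exp (- b * (x\<^sup>2 + y\<^sup>2)) * sqrt (x\<^sup>2 + y\<^sup>2)) \<partial>lborel \<partial>lborel)
     = ennreal (pi * sqrt pi / (2 * b * sqrt b))"
proof -
  define G where "G x y = exp (- b * (x\<^sup>2 + y\<^sup>2)) * sqrt (x\<^sup>2 + y\<^sup>2)" for x y :: real
  define H where "H x s = ennreal (x\<^sup>2 * sqrt (1 + s\<^sup>2) * exp (- (b * (1 + s\<^sup>2)) * x\<^sup>2)) * indicator {0<..} x * indicator {0<..} s" for x s :: real
  have Gm[measurable]: "(\<lambda>(x, y). G x y) \<in> borel_measurable borel"
    unfolding G_def by measurable
  have Hm[measurable]: "(\<lambda>(x, s). H x s) \<in> borel_measurable borel"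
    unfolding H_def by measurable
  have Gm2[measurable]: "G x \<in> borel_measurable borel" for x unfolding G_def by measurable
  have "(\<integral>\<^sup>+x. \<integral>\<^sup>+y. ennreal (G x y) \<partial>lborel \<partial>lborel)
      = (\<integral>\<^sup>+x. 2 * (\<integral>\<^sup>+y. ennreal (G x y) * indicator {0<..} y \<partial>lborel) \<partial>lborel)"
    by (intro nn_integral_cong even_nn) (auto simp: G_def)
  also have "\<dots> = 2 * (\<integral>\<^sup>+x. 2 * (\<integral>\<^sup>+y. ennreal (G x y) * indicator {0<..} y \<partial>lborel) * indicator {0<..} x \<partial>lborel)"
  proof (rule even_nn)
    have "(\<lambda>x. \<integral>\<^sup>+y. ennreal (G x y) * indicator {0<..} y \<partial>lborel) \<in> borel_measurable borel"
      unfolding G_def by (rule meas_nn_int) measurable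
    then show "(\<lambda>x. 2 * (\<integral>\<^sup>+y. ennreal (G x y) * indicator {0<..} y \<partial>lborel)) \<in> borel_measurable borel"
      by measurable
  qed (simp add: G_def)
  also have "\<dots> = 2 * (\<integral>\<^sup>+x. 2 * (\<integral>\<^sup>+s. H x s \<partial>lborel) \<partial>lborel)"
  proof -
    have "(\<integral>\<^sup>+y. ennreal (G x y) * indicator {0<..} y \<partial>lborel) * indicator {0<..} x = (\<integral>\<^sup>+s. H x s \<partial>lborel)" for x
    proof (cases "0 < x")
      case True
      have "(\<integral>\<^sup>+y. ennreal (G x y) * indicator {0<..} y \<partial>lborel)
          = ennreal \<bar>x\<bar> * (\<integral>\<^sup>+s. ennreal (G x (0 + x * s)) * indicator {0<..} (0 + x * s) \<partial>lborel)"
        by (rule nn_integral_real_affine) (use True in auto)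
      also have "\<dots> = (\<integral>\<^sup>+s. H x s \<partial>lborel)"
      proof -
        have "ennreal x * (ennreal (G x (x * s)) * indicator {0<..} (x * s)) = H x s" for s
        proof -
          have "sqrt (x\<^sup>2 + (x * s)\<^sup>2) = x * sqrt (1 + s\<^sup>2)"
          proof -
            have "x\<^sup>2 + (x * s)\<^sup>2 = x\<^sup>2 * (1 + s\<^sup>2)" by (simp add: algebra_simps power_mult_distrib)
            then show ?thesis using True by (simp add: real_sqrt_mult)
          qed
          moreover have "- b * (x\<^sup>2 + (x * s)\<^sup>2) = - (b * (1 + s\<^sup>2)) * x\<^sup>2"
            by (simp add: algebra_simps power_mult_distrib)
          moreover have "(0 < x * s) = (0 < s)" using True by (simp add: zero_less_mult_iff)
          ultimately show ?thesis using True
            by (auto simp: G_def H_def ennreal_mult[symmetric] power2_eq_square split: split_indicator)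
        qed
        then show ?thesis using True by (subst nn_integral_cmult[symmetric]) auto
      qed
      finally show ?thesis using True by simp
    next
      case False
      then show ?thesis by (simp add: H_def)
    qed
    then show ?thesis by (simp add: mult.assoc)
  qed
  also have "\<dots> = 4 * (\<integral>\<^sup>+x. \<integral>\<^sup>+s. H x s \<partial>lborel \<partial>lborel)"
    using meas_nn_int[OF Hm] by (subst nn_integral_cmult) (auto simp: mult.assoc[symmetric])
  also have "(\<integral>\<^sup>+x. \<integral>\<^sup>+s. H x s \<partial>lborel \<partial>lborel) = (\<integral>\<^sup>+s. \<integral>\<^sup>+x. H x s \<partial>lborel \<partial>lborel)"
    by (rule lborel_pair.Fubini'[symmetric, of H]) (simp add: lborel_prod Hm)
  also have "\<dots> = (\<integral>\<^sup>+s. ennreal (sqrt pi / (4 * b * sqrt b)) * (ennreal (1 / (1 + s\<^sup>2)) * indicator {0<..} s) \<partial>lborel)"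
  proof (intro nn_integral_cong)
    fix s :: real
    define a where "a = b * (1 + s\<^sup>2)"
    have a: "0 < a" using b by (simp add: a_def add_pos_nonneg)
    have "(\<integral>\<^sup>+x. H x s \<partial>lborel) = (\<integral>\<^sup>+x. (ennreal (sqrt (1 + s\<^sup>2)) * indicator {0<..} s) * (ennreal (x\<^sup>2 * exp (- a * x\<^sup>2)) * indicator {0<..} x) \<partial>lborel)"
    proof (intro nn_integral_cong)
      fix x :: real
      have e: "ennreal (x\<^sup>2 * sqrt (1 + s\<^sup>2) * exp (- (b * (1 + s\<^sup>2)) * x\<^sup>2))
          = ennreal (sqrt (1 + s\<^sup>2)) * ennreal (x\<^sup>2 * exp (- a * x\<^sup>2))"
        unfolding a_def by (subst ennreal_mult[symmetric]) (auto simp: mult_ac)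
      show "H x s = (ennreal (sqrt (1 + s\<^sup>2)) * indicator {0<..} s) * (ennreal (x\<^sup>2 * exp (- a * x\<^sup>2)) * indicator {0<..} x)"
        unfolding H_def e by (simp add: mult_ac)
    qed
    also have "\<dots> = (ennreal (sqrt (1 + s\<^sup>2)) * indicator {0<..} s) * ennreal (sqrt pi / (4 * a * sqrt a))"
      using moment2[OF a] by (subst nn_integral_cmult) auto
    also have "\<dots> = ennreal (sqrt pi / (4 * b * sqrt b)) * (ennreal (1 / (1 + s\<^sup>2)) * indicator {0<..} s)"
    proof -
      have p: "0 < 1 + s\<^sup>2" by (simp add: add_pos_nonneg)
      define q where "q = sqrt (1 + s\<^sup>2)"
      have q: "0 < q" using p by (simp add: q_def)
      have q2: "1 + s\<^sup>2 = q * q" using p by (simp add: q_def)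
      have sa: "sqrt a = sqrt b * q" by (simp add: a_def q_def real_sqrt_mult)
      have sb: "0 < sqrt b" using b by simp
      have "sqrt (1 + s\<^sup>2) * (sqrt pi / (4 * a * sqrt a)) = q * (sqrt pi / (4 * (b * (q * q)) * (sqrt b * q)))"
      proof -
        have e1: "sqrt (1 + s\<^sup>2) = q" by (simp add: q_def)
        have e2: "a = b * (q * q)" by (simp add: a_def q2)
        have e3: "sqrt (b * (q * q)) = sqrt b * q" using q by (simp add: real_sqrt_mult)
        show ?thesis by (simp only: e1 e2 e3)
      qed
      also have "\<dots> = sqrt pi / (4 * b * sqrt b) * (1 / (q * q))"
        using q b sb by (simp add: field_simps)
      finally have "sqrt (1 + s\<^sup>2) * (sqrt pi / (4 * a * sqrt a)) = sqrt pi / (4 * b * sqrt b) * (1 / (1 + s\<^sup>2))"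
        by (simp only: q2)
      then show ?thesis using b a
        by (auto simp: ennreal_mult[symmetric] split: split_indicator)
    qed
    finally show "(\<integral>\<^sup>+x. H x s \<partial>lborel) = ennreal (sqrt pi / (4 * b * sqrt b)) * (ennreal (1 / (1 + s\<^sup>2)) * indicator {0<..} s)" .
  qed
  also have "\<dots> = ennreal (sqrt pi / (4 * b * sqrt b)) * ennreal (pi / 2)"
    by (subst nn_integral_cmult) (auto simp: arctan_int)
  finally have "(\<integral>\<^sup>+x. \<integral>\<^sup>+y. ennreal (G x y) \<partial>lborel \<partial>lborel) = 4 * (ennreal (sqrt pi / (4 * b * sqrt b)) * ennreal (pi / 2))" .
  also have "\<dots> = ennreal (4 * (sqrt pi / (4 * b * sqrt b) * (pi / 2)))"
  proof -
    have X: "0 \<le> sqrt pi / (4 * b * sqrt b)" using b by simp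
    have "ennreal (4 * (sqrt pi / (4 * b * sqrt b) * (pi / 2))) = ennreal 4 * ennreal (sqrt pi / (4 * b * sqrt b) * (pi / 2))"
      by (rule ennreal_mult) (use X b in simp_all)
    also have "ennreal (sqrt pi / (4 * b * sqrt b) * (pi / 2)) = ennreal (sqrt pi / (4 * b * sqrt b)) * ennreal (pi / 2)"
      by (rule ennreal_mult) (use X b in simp_all)
    finally show ?thesis by simp
  qed
  also have "4 * (sqrt pi / (4 * b * sqrt b) * (pi / 2)) = pi * sqrt pi / (2 * b * sqrt b)"
    using b by (simp add: field_simps)
  finally show ?thesis by (simp add: G_def)
qed



lemma norm_int_nn:
  assumes s: "0 < \<sigma>"
  shows "(\<integral>\<^sup>+z. ennreal (nd2 \<sigma> z * norm z) \<partial>lborel) = ennreal (\<sigma> * sqrt (pi / 2))"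
proof -
  define b where "b = 1 / (2 * \<sigma>\<^sup>2)"
  define C where "C = 1 / (2 * pi * \<sigma>\<^sup>2)"
  have b: "0 < b" using s by (simp add: b_def)
  have C: "0 < C" using s by (simp add: C_def)
  have pt: "nd2 \<sigma> (x, y) * norm (x, y) = C * (exp (- b * (x\<^sup>2 + y\<^sup>2)) * sqrt (x\<^sup>2 + y\<^sup>2))" for x y
  proof -
    have "nd2 \<sigma> (x, y) = C * exp (- b * (x\<^sup>2 + y\<^sup>2))"
      using s by (simp add: nd2_def normal_density_def C_def b_def mult_exp_exp real_sqrt_mult[symmetric]
          power2_eq_square field_simps)
    moreover have "norm (x, y) = sqrt (x\<^sup>2 + y\<^sup>2)" by (simp add: norm_Pair)
    ultimately show ?thesis by simp
  qed
  have meas: "(\<lambda>p. ennreal (nd2 \<sigma> p * norm p)) \<in> borel_measurable (lborel \<Otimes>\<^sub>M lborel)"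
    unfolding lborel_prod by measurable
  have "(\<integral>\<^sup>+z. ennreal (nd2 \<sigma> z * norm z) \<partial>lborel) = (\<integral>\<^sup>+z. ennreal (nd2 \<sigma> z * norm z) \<partial>(lborel \<Otimes>\<^sub>M lborel))"
    by (simp add: lborel_prod)
  also have "\<dots> = (\<integral>\<^sup>+x. \<integral>\<^sup>+y. ennreal (nd2 \<sigma> (x, y) * norm (x, y)) \<partial>lborel \<partial>lborel)"
    by (rule lborel.nn_integral_fst[symmetric, OF meas])
  also have "\<dots> = (\<integral>\<^sup>+x. ennreal C * \<integral>\<^sup>+y. ennreal (exp (- b * (x\<^sup>2 + y\<^sup>2)) * sqrt (x\<^sup>2 + y\<^sup>2)) \<partial>lborel \<partial>lborel)"
    using C by (simp only: pt, subst nn_integral_cmult[symmetric]) (auto intro!: nn_integral_cong simp: ennreal_mult)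
  also have "\<dots> = ennreal C * (\<integral>\<^sup>+x. \<integral>\<^sup>+y. ennreal (exp (- b * (x\<^sup>2 + y\<^sup>2)) * sqrt (x\<^sup>2 + y\<^sup>2)) \<partial>lborel \<partial>lborel)"
  proof (rule nn_integral_cmult)
    have "(\<lambda>x. \<integral>\<^sup>+y. ennreal (exp (- b * (x\<^sup>2 + y\<^sup>2)) * sqrt (x\<^sup>2 + y\<^sup>2)) \<partial>lborel) \<in> borel_measurable borel"
      by (rule meas_nn_int) measurable
    then show "(\<lambda>x. \<integral>\<^sup>+y. ennreal (exp (- b * (x\<^sup>2 + y\<^sup>2)) * sqrt (x\<^sup>2 + y\<^sup>2)) \<partial>lborel) \<in> borel_measurable lborel"
      by simp
  qed
  also have "\<dots> = ennreal C * ennreal (pi * sqrt pi / (2 * b * sqrt b))"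
    using K_int[OF b] by simp
  also have "\<dots> = ennreal (C * (pi * sqrt pi / (2 * b * sqrt b)))"
    by (rule ennreal_mult[symmetric]) (use b C in auto)
  also have "C * (pi * sqrt pi / (2 * b * sqrt b)) = \<sigma> * sqrt (pi / 2)"
  proof -
    have sb: "sqrt b = 1 / (sqrt 2 * \<sigma>)"
      using s by (simp add: b_def real_sqrt_divide real_sqrt_mult)
    have s2: "sqrt 2 * sqrt 2 = (2::real)" by simp
    have sp: "sqrt (pi / 2) = sqrt pi / sqrt 2" by (simp add: real_sqrt_divide)
    show ?thesis unfolding sb sp using s s2 by (simp add: C_def b_def field_simps power2_eq_square)
  qed
  finally show ?thesis .
qed

lemma norm_int_nu:
  assumes s: "0 < \<sigma>"
  shows "integrable (nu \<sigma>) norm" "(\<integral>z. norm z \<partial>nu \<sigma>) = \<sigma> * sqrt (pi / 2)"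
proof -
  have "(\<integral>\<^sup>+z. ennreal (norm z) \<partial>nu \<sigma>) = (\<integral>\<^sup>+z. ennreal (nd2 \<sigma> z * norm z) \<partial>lborel)"
    unfolding nu_def by (subst nn_integral_density) (auto simp: ennreal_mult nd2_nonneg)
  also have "\<dots> = ennreal (\<sigma> * sqrt (pi / 2))" by (rule norm_int_nn[OF s])
  finally have *: "(\<integral>\<^sup>+z. ennreal (norm z) \<partial>nu \<sigma>) = ennreal (\<sigma> * sqrt (pi / 2))" .
  have "integrable (nu \<sigma>) norm \<and> integral\<^sup>L (nu \<sigma>) norm = \<sigma> * sqrt (pi / 2)"
    using * s by (subst nn_integral_eq_integrable[symmetric]) auto
  then show "integrable (nu \<sigma>) norm" "(\<integral>z. norm z \<partial>nu \<sigma>) = \<sigma> * sqrt (pi / 2)" by auto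
qed



lemma N_fst_int:
  assumes s: "0 < \<sigma>"
  shows "integrable (nu \<sigma>) fst" "(\<integral>z. fst z \<partial>nu \<sigma>) = 0"
    "integrable (nu \<sigma>) snd" "(\<integral>z. snd z \<partial>nu \<sigma>) = 0"
proof -
  let ?N = "density lborel (normal_density 0 \<sigma>)"
  interpret N: prob_space ?N using prob_space_normal_density[OF s] .
  interpret NN: pair_prob_space ?N ?N ..
  have d1: "distr (?N \<Otimes>\<^sub>M ?N) ?N fst = ?N" by (rule N.distr_pair_fst)
  have d2: "distr (?N \<Otimes>\<^sub>M ?N) ?N snd = ?N"
  proof (intro measure_eqI)
    fix A assume A: "A \<in> sets (distr (?N \<Otimes>\<^sub>M ?N) ?N snd)"
    from A have "emeasure (distr (?N \<Otimes>\<^sub>M ?N) ?N snd) A = emeasure (?N \<Otimes>\<^sub>M ?N) (space ?N \<times> A)"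
      by (auto simp add: emeasure_distr space_pair_measure dest: sets.sets_into_space intro!: arg_cong2[where f=emeasure])
    with A show "emeasure (distr (?N \<Otimes>\<^sub>M ?N) ?N snd) A = emeasure ?N A"
      using N.emeasure_space_1 by (simp add: N.emeasure_pair_measure_Times)
  qed simp
  have iN: "integrable ?N (\<lambda>x. x)"
    using integrable_normal_moment_nz_1[OF s, of 0] by (subst integrable_density) auto
  have vN: "(\<integral>x. x \<partial>?N) = 0"
    using integral_normal_moment_nz_1[OF s, of 0] by (subst integral_density) auto
  have mf: "fst \<in> measurable (?N \<Otimes>\<^sub>M ?N) ?N" and ms: "snd \<in> measurable (?N \<Otimes>\<^sub>M ?N) ?N" by auto
  have bx: "(\<lambda>x::real. x) \<in> borel_measurable ?N" by simp
  have "integrable (distr (?N \<Otimes>\<^sub>M ?N) ?N fst) (\<lambda>x. x)" unfolding d1 by (rule iN)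
  then have "integrable (?N \<Otimes>\<^sub>M ?N) (\<lambda>z. fst z)" by (simp only: integrable_distr_eq[OF mf bx])
  then show "integrable (nu \<sigma>) fst" by (simp only: nu_prod[OF s])
  have "integrable (distr (?N \<Otimes>\<^sub>M ?N) ?N snd) (\<lambda>x. x)" unfolding d2 by (rule iN)
  then have "integrable (?N \<Otimes>\<^sub>M ?N) (\<lambda>z. snd z)" by (simp only: integrable_distr_eq[OF ms bx])
  then show "integrable (nu \<sigma>) snd" by (simp only: nu_prod[OF s])
  have "(\<integral>z. fst z \<partial>(?N \<Otimes>\<^sub>M ?N)) = (\<integral>x. x \<partial>distr (?N \<Otimes>\<^sub>M ?N) ?N fst)"
    by (simp only: integral_distr[OF mf bx])
  then show "(\<integral>z. fst z \<partial>nu \<sigma>) = 0" unfolding d1 vN by (simp only: nu_prod[OF s])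
  have "(\<integral>z. snd z \<partial>(?N \<Otimes>\<^sub>M ?N)) = (\<integral>x. x \<partial>distr (?N \<Otimes>\<^sub>M ?N) ?N snd)"
    by (simp only: integral_distr[OF ms bx])
  then show "(\<integral>z. snd z \<partial>nu \<sigma>) = 0" unfolding d2 vN by (simp only: nu_prod[OF s])
qed

lemma pop_risk_zero: "pop_risk w = 0"
proof -
  have eq: "(\<lambda>z. loss w z) = (\<lambda>z. - (fst w * fst z + snd w * snd z))"
    by (auto simp: loss_def inner_prod_def fun_eq_iff)
  note I = N_fst_int[of 1, simplified]
  show ?thesis
    unfolding pop_risk_def eq mu2_nu
    using I by (simp add: integral_add integral_mult_right)
qed

lemma emp_risk_sample:
  "emp_risk n (sample Z n \<omega>) w = - inner w (zbar Z n \<omega>)"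
proof -
  have "(\<Sum>i<n. loss w (sample Z n \<omega> i)) = - inner w (\<Sum>i<n. Z i \<omega>)"
    by (simp add: loss_def sample_def inner_sum_right sum_negf)
  then show ?thesis
    by (simp add: emp_risk_def zbar_def divide_inverse mult.commute)
qed

lemma inner_normalize: "inner ((1 / norm v) *\<^sub>R v) v = norm v"
  by (cases "v = 0") (simp_all add: power2_norm_eq_inner[symmetric] power2_eq_square)

lemma phase_hyp:
  fixes w :: "real \<times> real" assumes "norm w = 1"
  shows "hyp (phase w) = w"
proof -
  have "(snd w)\<^sup>2 + (fst w)\<^sup>2 = 1"
    using assms by (cases w) (simp add: norm_Pair)
  then obtain t where t: "0 \<le> t" "t < 2 * pi" "snd w = cos t" "fst w = sin t"
    by (rule sincos_total_2pi)
  then have "\<exists>\<phi>. 0 \<le> \<phi> \<and> \<phi> < 2 * pi \<and> hyp \<phi> = w"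
    by (intro exI[of _ t]) (auto simp: hyp_def prod_eq_iff)
  then show ?thesis unfolding phase_def by (rule someI2_ex) auto
qed

lemma hyp_mod2pi: "hyp (mod2pi x) = hyp x"
proof -
  have "sin (x - 2 * pi * of_int k) = sin x" "cos (x - 2 * pi * of_int k) = cos x" for k :: int
    by (simp_all add: sin_diff cos_diff)
  then show ?thesis by (simp add: hyp_def mod2pi_def)
qed

lemma hyp_add:
  fixes w :: "real \<times> real" assumes "norm w = 1"
  shows "hyp (mod2pi (phase w + t)) = (fst w * cos t + snd w * sin t, snd w * cos t - fst w * sin t)"
proof -
  have "hyp (phase w) = w" using phase_hyp[OF assms] .
  then have "sin (phase w) = fst w" "cos (phase w) = snd w" by (cases w; auto simp: hyp_def)+
  then show ?thesis by (simp only: hyp_mod2pi) (simp add: hyp_def sin_add cos_add)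
qed

lemma inner_pert:
  fixes v :: "real \<times> real"
  shows "inner (hyp (mod2pi (phase ((1 / norm v) *\<^sub>R v) + t))) v = norm v * cos t"
proof (cases "v = 0")
  case True then show ?thesis by simp
next
  case False
  define w where "w = (1 / norm v) *\<^sub>R v"
  define r where "r = norm v"
  have nw: "norm w = 1" using False by (simp add: w_def)
  have v: "v = (r * fst w, r * snd w)" using False by (simp add: w_def r_def)
  have w1: "(fst w)\<^sup>2 + (snd w)\<^sup>2 = 1" using nw by (cases w) (simp add: norm_Pair)
  have h: "hyp (mod2pi (phase w + t)) = (fst w * cos t + snd w * sin t, snd w * cos t - fst w * sin t)"
    by (rule hyp_add[OF nw])
  have "inner (hyp (mod2pi (phase w + t))) v = r * cos t * ((fst w)\<^sup>2 + (snd w)\<^sup>2)"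
    unfolding h by (subst v) (simp add: inner_prod_def algebra_simps power2_eq_square)
  then show ?thesis using w1 by (simp add: w_def r_def)
qed

lemma KL_inf:
  assumes "G \<in> null_sets Q" "G \<notin> null_sets P"
  shows "KL_ext P Q = \<infinity>"
  using assms unfolding KL_ext_def absolutely_continuous_def by auto

lemma singleton_null_density:
  assumes [measurable]: "f \<in> borel_measurable borel"
  shows "emeasure (density lborel (\<lambda>x. ennreal (f x))) {a :: real} = 0"
proof -
  have "emeasure (density lborel (\<lambda>x. ennreal (f x))) {a} = (\<integral>\<^sup>+x. ennreal (f x) * indicator {a} x \<partial>lborel)"
    by (rule emeasure_density) auto
  also have "\<dots> = 0"
    by (subst nn_integral_0_iff_AE) (use AE_lborel_singleton[of a] in \<open>auto elim!: eventually_mono\<close>)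
  finally show ?thesis .
qed

lemma line_null:
  assumes s: "0 < \<sigma>" and cd: "(c, d) \<noteq> (0 :: real, 0 :: real)"
  shows "emeasure (nu \<sigma>) {z. c * fst z + d * snd z = 0} = 0"
proof -
  let ?N = "density lborel (\<lambda>x. ennreal (normal_density 0 \<sigma> x))"
  interpret N: prob_space ?N using prob_space_normal_density[OF s] .
  interpret NN: pair_prob_space ?N ?N ..
  let ?L = "{z :: real \<times> real. c * fst z + d * snd z = 0}"
  have Lb: "?L \<in> sets borel" by measurable
  have L: "?L \<in> sets (?N \<Otimes>\<^sub>M ?N)"
  proof -
    have "sets (?N \<Otimes>\<^sub>M ?N) = sets (borel :: (real \<times> real) measure)"
      by (subst borel_prod[symmetric]) (rule sets_pair_measure_cong; simp)
    then show ?thesis using Lb by simp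
  qed
  show ?thesis
  proof (cases "d = 0")
    case False
    have "emeasure (?N \<Otimes>\<^sub>M ?N) ?L = (\<integral>\<^sup>+x. emeasure ?N (Pair x -` ?L) \<partial>?N)"
      by (rule N.emeasure_pair_measure_alt[OF L])
    also have "\<dots> = (\<integral>\<^sup>+x. 0 \<partial>?N)"
    proof (intro nn_integral_cong)
      fix x
      have "Pair x -` ?L = {- c * x / d}" using False by (auto simp: field_simps)
      then show "emeasure ?N (Pair x -` ?L) = 0" by (simp add: singleton_null_density)
    qed
    finally show ?thesis by (simp add: nu_prod[OF s])
  next
    case True
    then have c: "c \<noteq> 0" using cd by auto
    have "emeasure (?N \<Otimes>\<^sub>M ?N) ?L = (\<integral>\<^sup>+y. emeasure ?N ((\<lambda>x. (x, y)) -` ?L) \<partial>?N)"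
      by (rule NN.emeasure_pair_measure_alt2[OF L])
    also have "\<dots> = (\<integral>\<^sup>+y. 0 \<partial>?N)"
    proof (intro nn_integral_cong)
      fix y
      have "(\<lambda>x. (x, y)) -` ?L = {0}" using True c by auto
      then show "emeasure ?N ((\<lambda>x. (x, y)) -` ?L) = 0" by (simp add: singleton_null_density)
    qed
    finally show ?thesis by (simp add: nu_prod[OF s])
  qed
qed

lemma (in prob_space) indep_vars_sum2:
  fixes X :: "'i \<Rightarrow> 'a \<Rightarrow> real \<times> real"
  assumes I: "finite I" "i \<notin> I" and indep: "indep_vars (\<lambda>_. borel) X (insert i I)"
  shows "indep_var borel (X i) borel (\<lambda>\<omega>. \<Sum>i\<in>I. X i \<omega>)"
proof -
  have "indep_var
    borel ((\<lambda>f. f i) \<circ> (\<lambda>\<omega>. restrict (\<lambda>i. X i \<omega>) {i}))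
    borel ((\<lambda>f. \<Sum>i\<in>I. f i) \<circ> (\<lambda>\<omega>. restrict (\<lambda>i. X i \<omega>) I))"
    using I by (intro indep_var_compose[OF indep_var_restrict[OF indep]] ) auto
  also have "((\<lambda>f. f i) \<circ> (\<lambda>\<omega>. restrict (\<lambda>i. X i \<omega>) {i})) = X i"
    by auto
  also have "((\<lambda>f. \<Sum>i\<in>I. f i) \<circ> (\<lambda>\<omega>. restrict (\<lambda>i. X i \<omega>) I)) = (\<lambda>\<omega>. \<Sum>i\<in>I. X i \<omega>)"
    by (auto cong: rev_conj_cong)
  finally show ?thesis .
qed

lemma (in prob_space) sum_distr:
  assumes Z: "\<forall>i<n. Z i \<in> borel_measurable M \<and> distr M borel (Z i) = mu2"
    and ind: "indep_vars (\<lambda>_. borel) Z {..<n}"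
  shows "1 \<le> k \<Longrightarrow> k \<le> n \<Longrightarrow> distr M borel (\<lambda>\<omega>. \<Sum>i<k. Z i \<omega>) = nu (sqrt (real k))"
proof (induction k)
  case 0 then show ?case by simp
next
  case (Suc k)
  show ?case
  proof (cases "k = 0")
    case True
    then show ?thesis using Z Suc.prems by (simp add: mu2_nu)
  next
    case False
    then have k1: "1 \<le> k" by simp
    have IH: "distr M borel (\<lambda>\<omega>. \<Sum>i<k. Z i \<omega>) = nu (sqrt (real k))"
      using Suc.IH[OF k1] Suc.prems by simp
    have "indep_vars (\<lambda>_. borel) Z (insert k {..<k})"
      by (rule indep_vars_subset[OF ind]) (use Suc.prems in auto)
    then have iv: "indep_var borel (Z k) borel (\<lambda>\<omega>. \<Sum>i<k. Z i \<omega>)"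
      using indep_vars_sum2[of "{..<k}" k Z] by auto
    have mZ: "Z i \<in> borel_measurable M" if "i < n" for i using Z that by auto
    have mk: "Z k \<in> borel_measurable M" using mZ Suc.prems by auto
    have ms: "(\<lambda>\<omega>. \<Sum>i<k. Z i \<omega>) \<in> borel_measurable M"
      using mZ Suc.prems by (intro borel_measurable_sum) auto
    have "distr M borel (\<lambda>\<omega>. \<Sum>i<Suc k. Z i \<omega>) = distr M borel (\<lambda>\<omega>. Z k \<omega> + (\<Sum>i<k. Z i \<omega>))"
      by (simp add: add.commute)
    also have "\<dots> = (distr M borel (Z k) \<star> distr M borel (\<lambda>\<omega>. \<Sum>i<k. Z i \<omega>))"
      by (rule sum_indep_random_variable[OF iv mk ms])
    also have "\<dots> = (nu 1 \<star> nu (sqrt (real k)))"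
      using Z Suc.prems IH by (simp add: mu2_nu)
    also have "\<dots> = nu (sqrt (1\<^sup>2 + (sqrt (real k))\<^sup>2))"
      by (rule nu_conv) (use k1 in auto)
    also have "\<dots> = nu (sqrt (real (Suc k)))"
      by simp
    finally show ?thesis .
  qed
qed



lemma int_cos_Ioo: "(\<integral>x. indicator {-pi<..<pi} x * cos x \<partial>lborel) = 0"
proof -
  have "(\<integral>x. indicator {-pi<..<pi} x * cos x \<partial>lborel) = (\<integral>x. indicator {-pi..pi} x *\<^sub>R cos x \<partial>lborel)"
  proof (rule integral_cong_AE)
    show "AE x in lborel. indicator {-pi<..<pi} x * cos x = indicator {-pi..pi} x *\<^sub>R cos x"
      using AE_lborel_singleton[of pi] AE_lborel_singleton[of "-pi"]
      by eventually_elim (auto split: split_indicator)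
  qed auto
  also have "\<dots> = sin pi - sin (- pi)"
    by (rule integral_FTC_atLeastAtMost)
       (auto intro!: derivative_eq_intros continuous_intros simp: has_real_derivative_iff_has_vector_derivative[symmetric])
  finally show ?thesis by simp
qed

lemma cos_expect:
  assumes PM: "prob_space M" and xm[measurable]: "\<xi> \<in> borel_measurable M" and e: "0 \<le> \<epsilon>" "\<epsilon> \<le> 1"
    and H: "\<forall>A \<in> sets borel. measure M {\<omega> \<in> space M. \<xi> \<omega> \<in> A}
           = \<epsilon> * indicator A 0 + (1 - \<epsilon>) * measure lborel (A \<inter> {-pi<..<pi}) / (2 * pi)"
  shows "(\<integral>\<omega>. cos (\<xi> \<omega>) \<partial>M) = \<epsilon>"
proof -
  interpret prob_space M by fact
  let ?P = "distr M borel \<xi>"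
  let ?I = "{-pi<..<pi} :: real set"
  define c where "c = (1 - \<epsilon>) / (2 * pi)"
  have c: "0 \<le> c" using e by (simp add: c_def)
  interpret P: prob_space ?P by (rule prob_space_distr) simp
  have mP: "measure ?P A = \<epsilon> * indicator A 0 + (1 - \<epsilon>) * measure lborel (A \<inter> ?I) / (2 * pi)"
    if "A \<in> sets borel" for A
  proof -
    have "measure ?P A = measure M (\<xi> -` A \<inter> space M)" by (rule measure_distr) (use that in auto)
    also have "\<xi> -` A \<inter> space M = {\<omega> \<in> space M. \<xi> \<omega> \<in> A}" by auto
    finally show ?thesis using H that by simp
  qed
  have "(\<integral>\<omega>. cos (\<xi> \<omega>) \<partial>M) = (\<integral>x. cos x \<partial>?P)"
    by (rule integral_distr[symmetric]) auto
  also have "\<dots> = (\<integral>x. indicator {0} x + indicator (- {0}) x * cos x \<partial>?P)"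
    by (intro Bochner_Integration.integral_cong) (auto split: split_indicator)
  also have "\<dots> = (\<integral>x. indicator {0} x \<partial>?P) + (\<integral>x. indicator (- {0}) x * cos x \<partial>?P)"
  proof (rule Bochner_Integration.integral_add)
    show "integrable ?P (indicator {0} :: real \<Rightarrow> real)"
      by (rule P.integrable_const_bound[where B=1]) (auto split: split_indicator)
    show "integrable ?P (\<lambda>x. indicator (- {0}) x * cos x :: real)"
      by (rule P.integrable_const_bound[where B=1]) (auto split: split_indicator)
  qed
  also have "(\<integral>x. indicator {0} x \<partial>?P) = \<epsilon>"
    using mP[of "{0}"] by simp
  also have "(\<integral>x. indicator (- {0}) x * cos x \<partial>?P) = 0"
  proof -
    have eqm: "density ?P (\<lambda>x. ennreal (indicator (- {0}) x)) = density lborel (\<lambda>x. ennreal (c * indicator ?I x))"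
    proof (rule measure_eqI)
      show "sets (density ?P (\<lambda>x. ennreal (indicator (- {0}) x))) = sets (density lborel (\<lambda>x. ennreal (c * indicator ?I x)))"
        by simp
      fix A assume "A \<in> sets (density ?P (\<lambda>x. ennreal (indicator (- {0}) x)))"
      then have A[measurable]: "A \<in> sets borel" by simp
      have "emeasure (density ?P (\<lambda>x. ennreal (indicator (- {0}) x))) A = (\<integral>\<^sup>+x. ennreal (indicator (- {0}) x) * indicator A x \<partial>?P)"
        by (rule emeasure_density) auto
      also have "\<dots> = (\<integral>\<^sup>+x. indicator (A - {0}) x \<partial>?P)"
        by (rule nn_integral_cong) (simp split: split_indicator)
      also have "\<dots> = emeasure ?P (A - {0})" by (rule nn_integral_indicator) auto
      also have "\<dots> = ennreal (measure ?P (A - {0}))" by (rule P.emeasure_eq_measure)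
      also have "measure ?P (A - {0}) = (1 - \<epsilon>) * measure lborel ((A \<inter> ?I) - {0}) / (2 * pi)"
      proof -
        have "(A - {0}) \<inter> ?I = (A \<inter> ?I) - {0}" by auto
        then show ?thesis using mP[of "A - {0}"] by simp
      qed
      also have "measure lborel ((A \<inter> ?I) - {0}) = measure lborel (A \<inter> ?I)"
        by (rule measure_Diff_null_set) (auto simp: null_sets_def)
      finally have L: "emeasure (density ?P (\<lambda>x. ennreal (indicator (- {0}) x))) A = ennreal ((1 - \<epsilon>) * measure lborel (A \<inter> ?I) / (2 * pi))" .
      have "emeasure (density lborel (\<lambda>x. ennreal (c * indicator ?I x))) A = (\<integral>\<^sup>+x. ennreal c * indicator (A \<inter> ?I) x \<partial>lborel)"
        by (subst emeasure_density) (auto intro!: nn_integral_cong split: split_indicator)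
      also have "\<dots> = ennreal c * emeasure lborel (A \<inter> ?I)"
        by (subst nn_integral_cmult) auto
      also have "emeasure lborel (A \<inter> ?I) = ennreal (measure lborel (A \<inter> ?I))"
      proof (rule emeasure_eq_ennreal_measure)
        have "emeasure lborel (A \<inter> ?I) \<le> emeasure lborel ?I" by (rule emeasure_mono) auto
        then show "emeasure lborel (A \<inter> ?I) \<noteq> \<top>" by (auto simp: top_unique)
      qed
      finally have R: "emeasure (density lborel (\<lambda>x. ennreal (c * indicator ?I x))) A = ennreal c * ennreal (measure lborel (A \<inter> ?I))" .
      show "emeasure (density ?P (\<lambda>x. ennreal (indicator (- {0}) x))) A = emeasure (density lborel (\<lambda>x. ennreal (c * indicator ?I x))) A"
        unfolding L R using c by (simp add: c_def ennreal_mult[symmetric])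
    qed
    have "(\<integral>x. indicator (- {0}) x * cos x \<partial>?P) = (\<integral>x. cos x \<partial>density ?P (\<lambda>x. ennreal (indicator (- {0}) x)))"
      by (subst integral_density) auto
    also have "\<dots> = (\<integral>x. cos x \<partial>density lborel (\<lambda>x. ennreal (c * indicator ?I x)))"
      by (simp only: eqm)
    also have "\<dots> = (\<integral>x. c * (indicator ?I x * cos x) \<partial>lborel)"
      using c by (subst integral_density) (auto simp: mult.assoc)
    also have "\<dots> = c * (\<integral>x. indicator ?I x * cos x \<partial>lborel)"
      by (rule integral_mult_right_zero)
    also have "\<dots> = 0" by (simp add: int_cos_Ioo)
    finally show ?thesis .
  qed
  finally show ?thesis by simp
qed



lemma sum_sample: "(\<Sum>i<n. sample Z n \<omega> i) = (\<Sum>i<n. Z i \<omega>)"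
  by (simp add: sample_def)

theorem mainTheorem8:
  fixes M :: "'a measure" and Z :: "nat \<Rightarrow> 'a \<Rightarrow> real \<times> real" and \<xi> :: "'a \<Rightarrow> real"
    and n :: nat and \<epsilon> :: real
  assumes "prob_space M"
    and "n \<ge> 1"
    and "\<forall>i<n. Z i \<in> borel_measurable M \<and> distr M borel (Z i) = mu2"
    and "prob_space.indep_vars M (\<lambda>_. borel) Z {..<n}"
    and "\<xi> \<in> borel_measurable M"
    and "distr M (sample_space n \<Otimes>\<^sub>M borel) (\<lambda>\<omega>. (sample Z n \<omega>, \<xi> \<omega>))
           = distr M (sample_space n) (sample Z n) \<Otimes>\<^sub>M distr M borel \<xi>"
    and "0 \<le> \<epsilon>" and "\<epsilon> \<le> 1"
    and "\<forall>A \<in> sets borel. measure M {\<omega> \<in> space M. \<xi> \<omega> \<in> A}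
           = \<epsilon> * indicator A 0 + (1 - \<epsilon>) * measure lborel (A \<inter> {-pi<..<pi}) / (2 * pi)"
  shows "gen M n (sample Z n) (erm Z n) = sqrt (pi / (2 * real n))
    \<and> gen M n (sample Z n) (perturbed Z n \<xi>) = \<epsilon> * sqrt (pi / (2 * real n))
    \<and> mutual_info M borel (erm Z n) (sample_space n) (sample Z n) = \<infinity>
    \<and> (0 < \<epsilon> \<and> \<epsilon> < 1 \<longrightarrow> mutual_info M borel (perturbed Z n \<xi>) (sample_space n) (sample Z n) = \<infinity>)"
proof -
  interpret prob_space M by fact
  note Zm = assms(3) and ind = assms(4)
  have n1: "1 \<le> n" by fact
  have npos: "0 < real n" using n1 by simp
  have mZ[measurable]: "Z i \<in> borel_measurable M" if "i < n" for i using Zm that by auto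
  have xm[measurable]: "\<xi> \<in> borel_measurable M" by fact
  define U where "U = (\<lambda>\<omega>. \<Sum>i<n. Z i \<omega>)"
  define SS where "SS = sample_space n"
  define S where "S = sample Z n"
  define zf where "zf = (\<lambda>s :: nat \<Rightarrow> real \<times> real. (1 / real n) *\<^sub>R (\<Sum>i<n. s i))"
  define Wf where "Wf = (\<lambda>s. (1 / norm (zf s)) *\<^sub>R zf s)"
  have Um[measurable]: "U \<in> borel_measurable M"
    unfolding U_def by (intro borel_measurable_sum) (use mZ in auto)
  have dU: "distr M borel U = nu (sqrt (real n))"
    unfolding U_def using sum_distr[OF Zm ind, of n] n1 by simp
  have sn: "0 < sqrt (real n)" using npos by simp
  have intU: "integrable M (\<lambda>\<omega>. norm (U \<omega>))"
    using norm_int_nu(1)[OF sn] integrable_distr_eq[of U M borel norm] dU by simp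
  have EU: "(\<integral>\<omega>. norm (U \<omega>) \<partial>M) = sqrt (real n) * sqrt (pi / 2)"
    using norm_int_nu(2)[OF sn] integral_distr[of U M borel norm] dU by simp
  have zb: "zbar Z n \<omega> = (1 / real n) *\<^sub>R U \<omega>" for \<omega>
    by (simp add: zbar_def U_def)
  have nzb: "norm (zbar Z n \<omega>) = norm (U \<omega>) / real n" for \<omega>
    using npos by (simp add: zb)
  have intZ: "integrable M (\<lambda>\<omega>. norm (zbar Z n \<omega>))"
    unfolding nzb using intU by simp
  have EZ: "(\<integral>\<omega>. norm (zbar Z n \<omega>) \<partial>M) = sqrt (pi / (2 * real n))"
  proof -
    have "(\<integral>\<omega>. norm (zbar Z n \<omega>) \<partial>M) = (\<integral>\<omega>. norm (U \<omega>) \<partial>M) / real n"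
      by (simp add: nzb)
    also have "\<dots> = sqrt (real n) * sqrt (pi / 2) / real n"
      by (simp only: EU)
    also have "\<dots> = sqrt (pi / 2) / sqrt (real n)"
      using sn npos by (simp add: field_simps)
    also have "\<dots> = sqrt (pi / (2 * real n))"
      by (simp add: real_sqrt_divide real_sqrt_mult)
    finally show ?thesis .
  qed
  have zbU: "zbar Z n \<omega> = zf (S \<omega>)" for \<omega>
    by (simp add: zbar_def zf_def S_def sum_sample)
  have ermW: "erm Z n \<omega> = Wf (S \<omega>)" for \<omega>
    by (simp add: erm_def Wf_def zbU)
  have G1: "gen M n (sample Z n) (erm Z n) = sqrt (pi / (2 * real n))"
  proof -
    have "gen M n (sample Z n) (erm Z n) = (\<integral>\<omega>. norm (zbar Z n \<omega>) \<partial>M)"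
      unfolding gen_def
    proof (intro Bochner_Integration.integral_cong refl)
      fix \<omega>
      show "pop_risk (erm Z n \<omega>) - emp_risk n (sample Z n \<omega>) (erm Z n \<omega>) = norm (zbar Z n \<omega>)"
        by (simp only: pop_risk_zero emp_risk_sample erm_def inner_normalize diff_0 minus_minus)
    qed
    then show ?thesis using EZ by simp
  qed
  have Sm[measurable]: "S \<in> measurable M SS"
    unfolding S_def SS_def sample_def[abs_def] sample_space_def by (intro measurable_restrict) (use mZ in auto)
  have zfm[measurable]: "zf \<in> borel_measurable SS"
    unfolding zf_def SS_def sample_space_def
    by (intro borel_measurable_scaleR borel_measurable_const borel_measurable_sum measurable_component_singleton) auto
  have Wfm[measurable]: "Wf \<in> borel_measurable SS"
    unfolding Wf_def by measurable
  define ga where "ga = (\<lambda>s. norm (zf s))"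
  have gam[measurable]: "ga \<in> borel_measurable SS" unfolding ga_def by measurable
  have gaS: "ga (S \<omega>) = norm (zbar Z n \<omega>)" for \<omega> by (simp add: ga_def zbU)
  have a6: "distr M (SS \<Otimes>\<^sub>M borel) (\<lambda>\<omega>. (S \<omega>, \<xi> \<omega>)) = distr M SS S \<Otimes>\<^sub>M distr M borel \<xi>"
    using assms(6) by (simp add: SS_def S_def)
  interpret PS: prob_space "distr M SS S" by (rule prob_space_distr) simp
  interpret PX: prob_space "distr M borel \<xi>" by (rule prob_space_distr) simp
  interpret PXc: prob_space "distr (distr M borel \<xi>) borel cos" by (rule PX.prob_space_distr) simp
  have hm: "(\<lambda>(s, t::real). (ga s, cos t)) \<in> measurable (SS \<Otimes>\<^sub>M borel) (borel \<Otimes>\<^sub>M borel)" by measurable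
  have "distr M (borel \<Otimes>\<^sub>M borel) (\<lambda>\<omega>. (norm (zbar Z n \<omega>), cos (\<xi> \<omega>)))
      = distr (distr M (SS \<Otimes>\<^sub>M borel) (\<lambda>\<omega>. (S \<omega>, \<xi> \<omega>))) (borel \<Otimes>\<^sub>M borel) (\<lambda>(s, t::real). (ga s, cos t))"
    by (subst distr_distr[OF hm]) (auto simp: o_def gaS)
  also have "\<dots> = distr (distr M SS S \<Otimes>\<^sub>M distr M borel \<xi>) (borel \<Otimes>\<^sub>M borel) (\<lambda>(s, t::real). (ga s, cos t))"
    by (simp only: a6)
  also have "\<dots> = distr (distr M SS S) borel ga \<Otimes>\<^sub>M distr (distr M borel \<xi>) borel cos"
    by (rule pair_measure_distr[symmetric]) (auto intro: PXc.sigma_finite_measure)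
  also have "\<dots> = distr M borel (\<lambda>\<omega>. norm (zbar Z n \<omega>)) \<Otimes>\<^sub>M distr M borel (\<lambda>\<omega>. cos (\<xi> \<omega>))"
    by (simp add: distr_distr o_def gaS)
  finally have ind2: "indep_var borel (\<lambda>\<omega>. norm (zbar Z n \<omega>)) borel (\<lambda>\<omega>. cos (\<xi> \<omega>))"
    by (subst indep_var_distribution_eq) (auto simp: zbU)
  have intc: "integrable M (\<lambda>\<omega>. cos (\<xi> \<omega>))"
    by (rule integrable_const_bound[where B=1]) auto
  have Ecos: "(\<integral>\<omega>. cos (\<xi> \<omega>) \<partial>M) = \<epsilon>"
    by (rule cos_expect[OF assms(1) xm assms(7,8,9)])
  have G2: "gen M n (sample Z n) (perturbed Z n \<xi>) = \<epsilon> * sqrt (pi / (2 * real n))"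
  proof -
    have "gen M n (sample Z n) (perturbed Z n \<xi>) = (\<integral>\<omega>. norm (zbar Z n \<omega>) * cos (\<xi> \<omega>) \<partial>M)"
      unfolding gen_def
    proof (intro Bochner_Integration.integral_cong refl)
      fix \<omega>
      show "pop_risk (perturbed Z n \<xi> \<omega>) - emp_risk n (sample Z n \<omega>) (perturbed Z n \<xi> \<omega>) = norm (zbar Z n \<omega>) * cos (\<xi> \<omega>)"
        by (simp only: pop_risk_zero emp_risk_sample perturbed_def erm_def inner_pert diff_0 minus_minus)
    qed
    also have "\<dots> = (\<integral>\<omega>. norm (zbar Z n \<omega>) \<partial>M) * (\<integral>\<omega>. cos (\<xi> \<omega>) \<partial>M)"
      by (rule indep_var_lebesgue_integral[OF ind2 intZ intc])
    finally show ?thesis by (simp add: EZ Ecos)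
  qed
  have ermE: "erm Z n = (\<lambda>\<omega>. Wf (S \<omega>))" by (simp add: fun_eq_iff ermW)
  have ermm[measurable]: "erm Z n \<in> borel_measurable M" unfolding ermE by measurable
  have erm0: "erm Z n \<omega> = 0 \<longleftrightarrow> zbar Z n \<omega> = 0" for \<omega>
    by (simp add: erm_def)
  have erm1: "norm (erm Z n \<omega>) = 1" if "zbar Z n \<omega> \<noteq> 0" for \<omega>
    using that by (simp add: erm_def)
  have atom: "emeasure M {\<omega> \<in> space M. erm Z n \<omega> = w} = 0" for w
  proof -
    define c where "c = (if w = 0 then 1 else snd w)"
    define d where "d = (if w = 0 then 0 else - fst w)"
    have cd: "(c, d) \<noteq> (0, 0)"
      by (cases w) (auto simp: c_def d_def zero_prod_def)
    let ?L = "{z :: real \<times> real. c * fst z + d * snd z = 0}"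
    have Lb: "?L \<in> sets borel" by measurable
    have sub: "{\<omega> \<in> space M. erm Z n \<omega> = w} \<subseteq> U -` ?L \<inter> space M"
    proof (intro subsetI)
      fix \<omega> assume "\<omega> \<in> {\<omega> \<in> space M. erm Z n \<omega> = w}"
      then have \<omega>: "\<omega> \<in> space M" and ew: "w = erm Z n \<omega>" by auto
      have Uz: "U \<omega> = real n *\<^sub>R zbar Z n \<omega>" using npos by (simp add: zb)
      have "c * fst (U \<omega>) + d * snd (U \<omega>) = 0"
      proof (cases "zbar Z n \<omega> = 0")
        case True then show ?thesis by (simp add: Uz)
      next
        case False
        have w0: "w \<noteq> 0" using erm1[OF False] ew by auto
        have zw: "zbar Z n \<omega> = norm (zbar Z n \<omega>) *\<^sub>R w"
          using False by (simp add: ew erm_def)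
        define k where "k = real n * norm (zbar Z n \<omega>)"
        have "U \<omega> = k *\<^sub>R w" unfolding Uz k_def by (subst zw) simp
        then show ?thesis using w0 by (simp add: c_def d_def algebra_simps)
      qed
      then show "\<omega> \<in> U -` ?L \<inter> space M" using \<omega> by simp
    qed
    have "emeasure M (U -` ?L \<inter> space M) = emeasure (distr M borel U) ?L"
      by (rule emeasure_distr[symmetric]) (auto simp: Lb)
    also have "\<dots> = 0" unfolding dU by (rule line_null[OF sn cd])
    finally show ?thesis
      by (rule emeasure_eq_0[rotated, OF _ sub]) (use Lb in measurable)
  qed
  define G where "G = (\<lambda>p. fst p - Wf (snd p)) -` {0} \<inter> space (borel \<Otimes>\<^sub>M SS)"
  have Gs: "G \<in> sets (borel \<Otimes>\<^sub>M SS)"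
  proof -
    have "(\<lambda>p. fst p - Wf (snd p)) \<in> borel_measurable (borel \<Otimes>\<^sub>M SS)" by measurable
    then show ?thesis unfolding G_def by (rule measurable_sets) simp
  qed
  have G_iff: "p \<in> G \<longleftrightarrow> snd p \<in> space SS \<and> fst p = Wf (snd p)" for p
    by (cases p) (auto simp: G_def space_pair_measure)
  have MIinf: "mutual_info M borel W1 SS S = \<infinity>"
    if W1m[measurable]: "W1 \<in> borel_measurable M" and E: "E \<in> sets M" "emeasure M E \<noteq> 0"
      and EW: "\<forall>\<omega>\<in>E. W1 \<omega> = Wf (S \<omega>)" for W1 E
  proof -
    let ?P = "distr M (borel \<Otimes>\<^sub>M SS) (\<lambda>\<omega>. (W1 \<omega>, S \<omega>))"
    let ?Q = "distr M borel W1 \<Otimes>\<^sub>M distr M SS S"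
    have sQ: "sets ?Q = sets (borel \<Otimes>\<^sub>M SS)" by (rule sets_pair_measure_cong) auto
    have GQ: "G \<in> sets ?Q" using Gs sQ by simp
    have "emeasure ?Q G = (\<integral>\<^sup>+w. emeasure (distr M SS S) (Pair w -` G) \<partial>distr M borel W1)"
      by (rule PS.emeasure_pair_measure_alt[OF GQ])
    also have "\<dots> = (\<integral>\<^sup>+w. 0 \<partial>distr M borel W1)"
    proof (rule nn_integral_cong)
      fix w
      have pre: "Pair w -` G = {s \<in> space SS. w = Wf s}" by (auto simp: G_iff)
      have ps: "{s \<in> space SS. w = Wf s} \<in> sets SS" by measurable
      have "emeasure (distr M SS S) (Pair w -` G) = emeasure M (S -` {s \<in> space SS. w = Wf s} \<inter> space M)"
        unfolding pre by (rule emeasure_distr) (auto simp: ps)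
      also have "S -` {s \<in> space SS. w = Wf s} \<inter> space M = {\<omega> \<in> space M. erm Z n \<omega> = w}"
        using measurable_space[OF Sm] by (auto simp: ermW)
      finally show "emeasure (distr M SS S) (Pair w -` G) = 0" by (simp add: atom)
    qed
    finally have "G \<in> null_sets ?Q" using GQ by (simp add: null_sets_def)
    moreover have "G \<notin> null_sets ?P"
    proof
      assume "G \<in> null_sets ?P"
      then have "emeasure ?P G = 0" by auto
      moreover have "emeasure ?P G = emeasure M ((\<lambda>\<omega>. (W1 \<omega>, S \<omega>)) -` G \<inter> space M)"
        by (rule emeasure_distr) (auto simp: Gs)
      moreover have "E \<subseteq> (\<lambda>\<omega>. (W1 \<omega>, S \<omega>)) -` G \<inter> space M"
        using EW sets.sets_into_space[OF E(1)] measurable_space[OF Sm] by (auto simp: G_iff)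
      then have "emeasure M E \<le> emeasure M ((\<lambda>\<omega>. (W1 \<omega>, S \<omega>)) -` G \<inter> space M)"
      proof (rule emeasure_mono)
        have "(\<lambda>\<omega>. (W1 \<omega>, S \<omega>)) \<in> measurable M (borel \<Otimes>\<^sub>M SS)" by measurable
        then show "(\<lambda>\<omega>. (W1 \<omega>, S \<omega>)) -` G \<inter> space M \<in> sets M" by (rule measurable_sets) (rule Gs)
      qed
      ultimately show False using E(2) by simp
    qed
    ultimately show ?thesis unfolding mutual_info_def by (rule KL_inf)
  qed
  have MI1: "mutual_info M borel (erm Z n) (sample_space n) (sample Z n) = \<infinity>"
    using MIinf[OF ermm, of "space M"] by (simp add: SS_def S_def ermW emeasure_space_1)
  define rot where "rot = (\<lambda>v :: real \<times> real. \<lambda>t :: real. if v = 0 then (sin (phase 0 + t), cos (phase 0 + t))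
     else (fst ((1 / norm v) *\<^sub>R v) * cos t + snd ((1 / norm v) *\<^sub>R v) * sin t,
           snd ((1 / norm v) *\<^sub>R v) * cos t - fst ((1 / norm v) *\<^sub>R v) * sin t))"
  have pert_rot: "perturbed Z n \<xi> \<omega> = rot (zbar Z n \<omega>) (\<xi> \<omega>)" for \<omega>
  proof (cases "zbar Z n \<omega> = 0")
    case True
    then have "erm Z n \<omega> = 0" by (simp add: erm_def)
    then show ?thesis using True by (simp add: perturbed_def rot_def hyp_mod2pi) (simp add: hyp_def)
  next
    case False
    have "perturbed Z n \<xi> \<omega> = hyp (mod2pi (phase (erm Z n \<omega>) + \<xi> \<omega>))" by (simp add: perturbed_def)
    also have "\<dots> = (fst (erm Z n \<omega>) * cos (\<xi> \<omega>) + snd (erm Z n \<omega>) * sin (\<xi> \<omega>),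
         snd (erm Z n \<omega>) * cos (\<xi> \<omega>) - fst (erm Z n \<omega>) * sin (\<xi> \<omega>))"
      by (rule hyp_add[OF erm1[OF False]])
    finally show ?thesis using False by (simp add: rot_def erm_def)
  qed
  have zbm[measurable]: "(\<lambda>\<omega>. zbar Z n \<omega>) \<in> borel_measurable M"
    unfolding zb by measurable
  have pm[measurable]: "perturbed Z n \<xi> \<in> borel_measurable M"
  proof -
    have "(\<lambda>\<omega>. rot (zbar Z n \<omega>) (\<xi> \<omega>)) \<in> borel_measurable M"
      unfolding rot_def by measurable
    moreover have "perturbed Z n \<xi> = (\<lambda>\<omega>. rot (zbar Z n \<omega>) (\<xi> \<omega>))"
      by (simp add: fun_eq_iff pert_rot)
    ultimately show ?thesis by simp
  qed
  have MI2: "mutual_info M borel (perturbed Z n \<xi>) (sample_space n) (sample Z n) = \<infinity>" if e0: "0 < \<epsilon>"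
  proof -
    define E where "E = {\<omega> \<in> space M. \<xi> \<omega> = 0} - {\<omega> \<in> space M. erm Z n \<omega> = 0}"
    have Es: "E \<in> sets M" unfolding E_def by measurable
    have n0: "{\<omega> \<in> space M. erm Z n \<omega> = 0} \<in> null_sets M"
      using atom[of 0] by (auto simp: null_sets_def) measurable
    have "emeasure M E = emeasure M {\<omega> \<in> space M. \<xi> \<omega> = 0}"
      unfolding E_def by (rule emeasure_Diff_null_set[OF n0]) measurable
    also have "\<dots> = ennreal (measure M {\<omega> \<in> space M. \<xi> \<omega> \<in> {0}})"
      by (simp add: emeasure_eq_measure)
    also have "measure M {\<omega> \<in> space M. \<xi> \<omega> \<in> {0}} = \<epsilon>"
      using assms(9)[rule_format, of "{0}"] by simp
    finally have "emeasure M E \<noteq> 0" using e0 by simp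
    moreover have "\<forall>\<omega>\<in>E. perturbed Z n \<xi> \<omega> = Wf (S \<omega>)"
    proof
      fix \<omega> assume "\<omega> \<in> E"
      then have x0: "\<xi> \<omega> = 0" and e0: "erm Z n \<omega> \<noteq> 0" by (auto simp: E_def)
      then have "zbar Z n \<omega> \<noteq> 0" by (simp add: erm0)
      then have "norm (erm Z n \<omega>) = 1" by (rule erm1)
      then have "hyp (phase (erm Z n \<omega>)) = erm Z n \<omega>" by (rule phase_hyp)
      then show "perturbed Z n \<xi> \<omega> = Wf (S \<omega>)"
        by (simp add: perturbed_def x0 hyp_mod2pi ermW)
    qed
    ultimately have "mutual_info M borel (perturbed Z n \<xi>) SS S = \<infinity>"
      by (intro MIinf[OF pm Es]) auto
    then show ?thesis by (simp add: SS_def S_def)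
  qed
  show ?thesis using G1 G2 MI1 MI2 by auto
qed


end
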